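(* For every online scheduling algorithm there exists a feasible job stream (with speed functions $f_j(t)=t-r_j$) on which the algorithm misses the due date of at least one job, i.e., some job $j$ has completion time $C_j>d_j$.
   Context: Jobs $j$ have release time $r_j$, due date $d_j>r_j$, work $w_j>0$, and speed function $f_j(t)=t-r_j$ for $t\ge r_j$. A single processor runs at most one job at a time, preemption is allowed, and running job $j$ during a set of times $S$ completes $\int_S f_j(t)\,dt$ units of its work; $C_j$ is the time at which job $j$'s work $w_j$ is completed. A job stream is feasible if there exists a schedule in which every job runs only within $[r_j,d_j]$ and completes by $d_j$. In the online setting, job $j$ (together with $w_j$ and $d_j$) becomes known to the algorithm only at time $r_j$, and the algorithm's decisions up to time $t$ may depend only on jobs released by time $t$. *)

theory Defs
  imports "HOL-Analysis.Analysis" "HOL-Library.Extended_Real"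
begin

type_synonym job = "real \<times> real \<times> real"

definition rel :: "job \<Rightarrow> real" where "rel j = fst j"
definition due :: "job \<Rightarrow> real" where "due j = fst (snd j)"
definition wk  :: "job \<Rightarrow> real" where "wk j = snd (snd j)"

text \<open>A job stream: a finite list of jobs with d > r and w > 0, listed in
  nondecreasing order of release time (so the jobs released by any time t
  form a prefix of the list).\<close>
definition job_stream :: "job list \<Rightarrow> bool" where
  "job_stream J \<longleftrightarrow> sorted (map rel J) \<and> (\<forall>j\<in>set J. rel j < due j \<and> 0 < wk j)"

text \<open>A schedule says, at each time, which job (index into the stream) runs,
  if any; so at most one job runs at a time and preemption is allowed.\<close>
type_synonym schedule = "real \<Rightarrow> nat option"

definition work :: "schedule \<Rightarrow> job list \<Rightarrow> nat \<Rightarrow> real \<Rightarrow> real" where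
  "work s J i t = integral {rel (J!i)..t}
      (\<lambda>\<tau>. if s \<tau> = Some i then \<tau> - rel (J!i) else 0)"

text \<open>Completion time C_i (infinity if the job is never completed).\<close>
definition completion :: "schedule \<Rightarrow> job list \<Rightarrow> nat \<Rightarrow> ereal" where
  "completion s J i = Inf (ereal ` {t. rel (J!i) \<le> t \<and> wk (J!i) \<le> work s J i t})"

definition feasible :: "job list \<Rightarrow> bool" where
  "feasible J \<longleftrightarrow> (\<exists>s::schedule.
      (\<forall>\<tau> i. s \<tau> = Some i \<longrightarrow> i < length J \<and> rel (J!i) \<le> \<tau> \<and> \<tau> \<le> due (J!i)) \<and>
      (\<forall>i<length J. completion s J i \<le> ereal (due (J!i))))"

definition online :: "(job list \<Rightarrow> schedule) \<Rightarrow> bool" where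
  "online A \<longleftrightarrow> (\<forall>J J' t. job_stream J \<longrightarrow> job_stream J' \<longrightarrow>
      takeWhile (\<lambda>j. rel j \<le> t) J = takeWhile (\<lambda>j. rel j \<le> t) J' \<longrightarrow>
      (\<forall>\<tau>\<le>t. A J \<tau> = A J' \<tau>))"

end

theory Submission
  imports Defs
begin

lemma nonneg_int0_negligible:
  fixes h :: "real \<Rightarrow> real"
  assumes hi: "h integrable_on S" and nn: "\<And>x. x\<in>S \<Longrightarrow> 0 \<le> h x" and z: "integral S h = 0"
  shows "negligible {x\<in>S. h x \<noteq> 0}"
proof -
  have af: "h absolutely_integrable_on S"
    using nn by (intro absolutely_integrable_onI hi integrable_eq[OF hi]) simp
  then have "integral S h = set_lebesgue_integral lebesgue S h"
    by (intro set_lebesgue_integral_eq_integral(2)[symmetric])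
  also have "\<dots> = 0 \<longleftrightarrow> (AE x in lebesgue. indicator S x *\<^sub>R h x = 0)"
    unfolding set_lebesgue_integral_def
  proof (rule integral_nonneg_eq_0_iff_AE)
    show "integrable lebesgue (\<lambda>x. indicat_real S x *\<^sub>R h x)"
      by (metis af set_integrable_def)
  qed (use nn in \<open>auto simp: indicator_def\<close>)
  finally have "AE x in lebesgue. indicator S x *\<^sub>R h x = 0" using z by simp
  then have "\<exists>N\<in>null_sets lebesgue. {x \<in> space lebesgue. \<not> (indicator S x *\<^sub>R h x = 0)} \<subseteq> N"
    by (simp add: eventually_ae_filter)
  then obtain N where N: "N \<in> null_sets lebesgue" "{x. \<not> (indicator S x *\<^sub>R h x = 0)} \<subseteq> N"
    by auto
  have "{x\<in>S. h x \<noteq> 0} \<subseteq> N" using N(2) by (auto simp: indicator_def)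
  then show ?thesis using N(1) negligible_iff_null_sets negligible_subset by blast
qed

lemma int_lin:
  assumes "a \<le> b"
  shows "integral {a..b} (\<lambda>x::real. x - c) = ((b-c)^2 - (a-c)^2)/2"
proof -
  have "((\<lambda>x::real. x - c) has_integral ((\<lambda>x. (x-c)^2/2) b - (\<lambda>x. (x-c)^2/2) a)) {a..b}"
    apply (rule fundamental_theorem_of_calculus[OF assms])
    apply (auto intro!: derivative_eq_intros simp: has_real_derivative_iff_has_vector_derivative[symmetric])
    done
  then show ?thesis by (simp add: integral_unique diff_divide_distrib)
qed


lemma lin_int: "(\<lambda>x::real. x - c) integrable_on {a..b}"
  by (intro integrable_continuous_interval continuous_intros)

lemma tight:
  fixes P :: "real \<Rightarrow> bool" and a m b :: real
  assumes am: "a < m" and mb: "m \<le> b"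
  and neg: "negligible {\<tau>\<in>{m..b}. P \<tau>}"
  and H: "\<And>d'. b < d' \<Longrightarrow> \<exists>t. a \<le> t \<and> t < d' \<and>
      (\<lambda>\<tau>. if P \<tau> then \<tau> - a else 0) integrable_on {a..t} \<and>
      (m-a)^2/2 \<le> integral {a..t} (\<lambda>\<tau>. if P \<tau> then \<tau> - a else 0)"
  shows "negligible {\<tau>\<in>{a..m}. \<not> P \<tau>}"
proof -
  define f where "f = (\<lambda>\<tau>. if P \<tau> then \<tau> - a else 0)"
  define K where "K = b + 1 - a"
  have K0: "0 < K" using am mb by (simp add: K_def)
  have key: "f integrable_on {a..m} \<and> (m-a)^2/2 - K*\<epsilon> \<le> integral {a..m} f"
    if e0: "0 < \<epsilon>" and e1: "\<epsilon> \<le> 1" for \<epsilon>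
  proof -
    obtain t where t: "a \<le> t" "t < b + \<epsilon>" and fi: "f integrable_on {a..t}"
      and W: "(m-a)^2/2 \<le> integral {a..t} f"
      using H[of "b+\<epsilon>"] e0 unfolding f_def by auto
    have mt: "m \<le> t"
    proof (rule ccontr)
      assume "\<not> m \<le> t"
      then have tm: "t < m" by simp
      have "integral {a..t} f \<le> integral {a..t} (\<lambda>x. x - a)"
        by (rule integral_le[OF fi lin_int]) (auto simp: f_def)
      also have "\<dots> = (t-a)^2/2" using int_lin[OF t(1), of a] by simp
      also have "\<dots> < (m-a)^2/2" using t(1) tm by (simp add: power_strict_mono)
      finally show False using W by simp
    qed
    have fim: "f integrable_on {a..m}" by (rule integrable_subinterval_real[OF fi]) (use mt in auto)
    have fimt: "f integrable_on {m..t}" by (rule integrable_subinterval_real[OF fi]) (use am in auto)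
    have split: "integral {a..m} f + integral {m..t} f = integral {a..t} f"
      by (rule Henstock_Kurzweil_Integration.integral_combine) (use am mt fi in auto)
    define g where "g = (\<lambda>\<tau>. if \<tau> \<in> {m..b} then 0 else f \<tau>)"
    have gf: "integral {m..t} f = integral {m..t} g"
      by (rule integral_spike[OF neg]) (auto simp: g_def f_def)
    have gi: "g integrable_on {m..t}"
      by (rule integrable_spike[OF fimt neg]) (auto simp: g_def f_def)
    have bnd: "integral {m..t} g \<le> K*\<epsilon>"
    proof (cases "t \<le> b")
      case True
      have "integral {m..t} g = integral {m..t} (\<lambda>_. 0::real)"
        by (rule integral_cong) (use True in \<open>auto simp: g_def\<close>)
      then show ?thesis using K0 e0 by simp
    next
      case False
      have gi1: "g integrable_on {m..b}" by (rule integrable_subinterval_real[OF gi]) (use False in auto)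
      have gi2: "g integrable_on {b..t}" by (rule integrable_subinterval_real[OF gi]) (use False mb in auto)
      have s2: "integral {m..b} g + integral {b..t} g = integral {m..t} g"
        by (rule Henstock_Kurzweil_Integration.integral_combine) (use False mb gi in auto)
      have z: "integral {m..b} g = integral {m..b} (\<lambda>_. 0::real)"
        by (rule integral_cong) (auto simp: g_def)
      have "integral {b..t} g \<le> integral {b..t} (\<lambda>_. K)"
        by (rule integral_le[OF gi2]) (use t am mb e1 in \<open>auto simp: g_def f_def K_def\<close>)
      also have "\<dots> = (t - b) * K" using False by simp
      also have "\<dots> \<le> \<epsilon> * K" using t K0 by (intro mult_right_mono) auto
      finally show ?thesis using s2 z by (simp add: mult.commute)
    qed
    show ?thesis using fim split gf bnd W by linarith
  qed
  have fim: "f integrable_on {a..m}" using key[of 1] by simp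
  have I: "(m-a)^2/2 \<le> integral {a..m} f"
  proof (rule ccontr)
    assume "\<not> ?thesis"
    then have d: "0 < (m-a)^2/2 - integral {a..m} f" by simp
    define \<epsilon> where "\<epsilon> = min 1 (((m-a)^2/2 - integral {a..m} f) / (2*K))"
    have e0: "0 < \<epsilon>" using d K0 by (simp add: \<epsilon>_def)
    have "K * \<epsilon> \<le> K * (((m-a)^2/2 - integral {a..m} f) / (2*K))"
      using K0 by (intro mult_left_mono) (auto simp: \<epsilon>_def)
    also have "\<dots> = ((m-a)^2/2 - integral {a..m} f)/2" using K0 by simp
    finally have "K*\<epsilon> \<le> ((m-a)^2/2 - integral {a..m} f)/2" .
    moreover have e1: "\<epsilon> \<le> 1" by (simp add: \<epsilon>_def)
    moreover have "(m-a)^2/2 - K*\<epsilon> \<le> integral {a..m} f" using key[OF e0 e1] by blast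
    moreover have "\<And>(W::real) (I::real) (x::real). x \<le> (W - I)/2 \<Longrightarrow> W - x \<le> I \<Longrightarrow> 0 < W - I \<Longrightarrow> False" by argo
    ultimately show False using d by blast
  qed
  define h where "h = (\<lambda>\<tau>. (\<tau> - a) - f \<tau>)"
  have hi: "h integrable_on {a..m}" unfolding h_def by (intro integrable_diff lin_int fim)
  have hint: "integral {a..m} h = (m-a)^2/2 - integral {a..m} f"
    unfolding h_def using integral_diff[OF lin_int fim] int_lin[of a m a] am by simp
  have hnn: "\<And>x. x \<in> {a..m} \<Longrightarrow> 0 \<le> h x" by (auto simp: h_def f_def)
  have "0 \<le> integral {a..m} h" by (rule integral_nonneg[OF hi hnn])
  then have "integral {a..m} h = 0" using hint I by linarith
  then have "negligible {x\<in>{a..m}. h x \<noteq> 0}" using nonneg_int0_negligible[OF hi hnn] by blast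
  moreover have "{\<tau>\<in>{a..m}. \<not> P \<tau>} \<subseteq> insert a {x\<in>{a..m}. h x \<noteq> 0}"
    by (auto simp: h_def f_def)
  ultimately show ?thesis using negligible_subset by (metis negligible_insert)
qed


lemma compl_le:
  assumes c: "completion s J i \<le> ereal d" and w: "0 < wk (J!i)" and dd: "d < d'"
  shows "\<exists>t. rel (J!i) \<le> t \<and> t < d' \<and>
    (\<lambda>\<tau>. if s \<tau> = Some i then \<tau> - rel (J!i) else 0) integrable_on {rel (J!i)..t} \<and>
    wk (J!i) \<le> integral {rel (J!i)..t} (\<lambda>\<tau>. if s \<tau> = Some i then \<tau> - rel (J!i) else 0)"
proof -
  have "Inf (ereal ` {t. rel (J!i) \<le> t \<and> wk (J!i) \<le> work s J i t}) < ereal d'"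
    using c dd unfolding completion_def by (meson ereal_less(3) le_less_trans ereal_less_eq(3) less_ereal.simps(1))
  then obtain t where t: "rel (J!i) \<le> t" "wk (J!i) \<le> work s J i t" "t < d'"
    by (auto simp: Inf_less_iff)
  have "(\<lambda>\<tau>. if s \<tau> = Some i then \<tau> - rel (J!i) else 0) integrable_on {rel (J!i)..t}"
  proof (rule ccontr)
    assume "\<not> ?thesis"
    then have "work s J i t = 0" unfolding work_def by (rule not_integrable_integral)
    then show False using t w by simp
  qed
  then show ?thesis using t unfolding work_def by blast
qed

lemma id_restr_int: "(\<lambda>x::real. if x \<in> {p..q} then x else 0) integrable_on {u..v}"
  unfolding integrable_restrict_Int Int_atLeastAtMost
  by (intro integrable_continuous_interval continuous_intros)

lemma job1_bad:
  assumes n1: "negligible {\<tau>\<in>{1..3/2}. P \<tau>}" and n2: "negligible {\<tau>\<in>{2..3}. P \<tau>}"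
  and t: "0 \<le> t" "t < 3 + 1/100" and fi: "(\<lambda>\<tau>. if P \<tau> then \<tau> else 0) integrable_on {0..t}"
  and W: "3/2 \<le> integral {0..t} (\<lambda>\<tau>. if P \<tau> then \<tau> else 0::real)"
  shows False
proof -
  define N where "N = {\<tau>\<in>{1..3/2}. P \<tau>} \<union> {\<tau>\<in>{2..3}. P \<tau>}"
  have nN: "negligible N" unfolding N_def using n1 n2 by (rule negligible_Un)
  define f where "f = (\<lambda>\<tau>. if P \<tau> then \<tau> else 0::real)"
  define f' where "f' = (\<lambda>\<tau>. if \<tau> \<in> N then 0 else f \<tau>)"
  define g where "g = (\<lambda>\<tau>::real. (if \<tau> \<in> {0..1} then \<tau> else 0) + (if \<tau> \<in> {3/2..2} then \<tau> else 0)
      + (if \<tau> \<in> {3..301/100} then \<tau> else 0))"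
  have gi: "g integrable_on {u..v}" for u v
    unfolding g_def by (intro integrable_add id_restr_int)
  have e1: "integral {0..t} f = integral {0..t} f'"
    by (rule integral_spike[OF nN]) (auto simp: f'_def)
  have f'i: "f' integrable_on {0..t}"
    by (rule integrable_spike[OF fi[folded f_def] nN]) (auto simp: f'_def)
  have "integral {0..t} f' \<le> integral {0..t} g"
    by (rule integral_le[OF f'i gi]) (use t in \<open>auto simp: f'_def f_def g_def N_def\<close>)
  also have "\<dots> \<le> integral {0..301/100} g"
    by (rule integral_subset_le) (use t gi in \<open>auto simp: g_def\<close>)
  also have "\<dots> = integral {0..301/100} (\<lambda>\<tau>::real. if \<tau> \<in> {0..1} then \<tau> else 0)
     + integral {0..301/100} (\<lambda>\<tau>::real. if \<tau> \<in> {3/2..2} then \<tau> else 0)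
     + integral {0..301/100} (\<lambda>\<tau>::real. if \<tau> \<in> {3..301/100} then \<tau> else 0)"
    unfolding g_def by (simp only: integral_add[OF integrable_add[OF id_restr_int id_restr_int] id_restr_int] integral_add[OF id_restr_int id_restr_int])
  also have "\<dots> = integral {0..1} (\<lambda>\<tau>::real. \<tau> - 0) + integral {3/2..2} (\<lambda>\<tau>::real. \<tau> - 0)
      + integral {3..301/100} (\<lambda>\<tau>::real. \<tau> - 0)"
    unfolding integral_restrict_Int Int_atLeastAtMost by simp
  also have "\<dots> = 1/2 + ((2::real)^2 - (3/2)^2)/2 + ((301/100::real)^2 - 3^2)/2"
    by (simp only: int_lin) simp
  also have "\<dots> < 3/2" by (simp add: power2_eq_square)
  finally show False using W e1 unfolding f_def by simp
qed

lemma feas_job: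
  assumes "finite F" "\<And>\<tau>. \<tau> \<notin> F \<Longrightarrow> (s \<tau> = Some i) = (p \<le> \<tau> \<and> \<tau> \<le> q)"
    "rel (J!i) \<le> p" "p \<le> q" "q \<le> d"
    "wk (J!i) \<le> ((q - rel(J!i))^2 - (p - rel(J!i))^2)/2"
  shows "completion s J i \<le> ereal d"
proof -
  have "work s J i q = integral {rel (J!i)..q} (\<lambda>\<tau>. if \<tau> \<in> {p..q} then \<tau> - rel (J!i) else 0)"
    unfolding work_def by (rule integral_spike[of F]) (use assms in auto)
  also have "\<dots> = integral {p..q} (\<lambda>\<tau>. \<tau> - rel (J!i))"
    unfolding integral_restrict_Int using assms by (simp add: Int_atLeastAtMost max_def min_def)
  also have "\<dots> = ((q - rel(J!i))^2 - (p - rel(J!i))^2)/2" using assms int_lin by blast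
  finally have "wk (J!i) \<le> work s J i q" using assms by simp
  then have "ereal q \<in> ereal ` {t. rel (J!i) \<le> t \<and> wk (J!i) \<le> work s J i t}" using assms by auto
  then have "completion s J i \<le> ereal q" unfolding completion_def by (rule Inf_lower)
  then show ?thesis using assms by (meson ereal_less_eq(3) order_trans)
qed


theorem theorem3:
  fixes A :: "job list \<Rightarrow> schedule"
  assumes "online A"
  shows "\<exists>J. job_stream J \<and> feasible J \<and>
           (\<exists>i<length J. completion (A J) J i > ereal (due (J!i)))"
proof (rule ccontr)
  assume neg: "\<not> ?thesis"
  define jB :: "job list" where "jB = [(0,3,3/2),(1,2,1/8),(2,3,1/2)]"
  define jC :: "job list" where "jC = [(0,3,3/2),(1,2,1/8),(3/2,2,1/8)]"
  have jsB: "job_stream jB" by (simp add: jB_def job_stream_def rel_def due_def wk_def)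
  have jsC: "job_stream jC" by (simp add: jC_def job_stream_def rel_def due_def wk_def)
  have i3: "\<And>i::nat. i < 3 \<Longrightarrow> i = 0 \<or> i = 1 \<or> i = 2" by auto
  have fB: "feasible jB"
  proof -
    define sc :: schedule where "sc = (\<lambda>\<tau>. if 2 \<le> \<tau> \<and> \<tau> \<le> 3 then Some 2
      else if 9/5 \<le> \<tau> \<and> \<tau> \<le> 2 then Some 1 else if 0 \<le> \<tau> \<and> \<tau> \<le> 9/5 then Some 0 else None)"
    have w: "\<forall>\<tau> i. sc \<tau> = Some i \<longrightarrow> i < length jB \<and> rel (jB!i) \<le> \<tau> \<and> \<tau> \<le> due (jB!i)"
      by (auto simp: sc_def jB_def rel_def due_def split: if_splits)
    have c0: "completion sc jB 0 \<le> ereal (due (jB!0))"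
      by (rule feas_job[where F="{9/5}" and p="0" and q="9/5"]) (auto simp: sc_def jB_def rel_def due_def wk_def power2_eq_square)
    have c1: "completion sc jB 1 \<le> ereal (due (jB!1))"
      by (rule feas_job[where F="{2}" and p="9/5" and q="2"]) (auto simp: sc_def jB_def rel_def due_def wk_def power2_eq_square)
    have c2: "completion sc jB 2 \<le> ereal (due (jB!2))"
      by (rule feas_job[where F="{}" and p="2" and q="3"]) (auto simp: sc_def jB_def rel_def due_def wk_def power2_eq_square)
    show ?thesis unfolding feasible_def
    proof (intro exI[of _ sc] conjI w allI impI)
      fix i assume "i < length jB"
      then have "i = 0 \<or> i = 1 \<or> i = 2" by (auto simp: jB_def)
      then show "completion sc jB i \<le> ereal (due (jB!i))" using c0 c1 c2 by auto
    qed
  qed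
  have fC: "feasible jC"
  proof -
    define sc :: schedule where "sc = (\<lambda>\<tau>. if 3/2 \<le> \<tau> \<and> \<tau> \<le> 2 then Some 2
      else if 1 \<le> \<tau> \<and> \<tau> \<le> 3/2 then Some 1 else if 2 \<le> \<tau> \<and> \<tau> \<le> 3 then Some 0 else None)"
    have w: "\<forall>\<tau> i. sc \<tau> = Some i \<longrightarrow> i < length jC \<and> rel (jC!i) \<le> \<tau> \<and> \<tau> \<le> due (jC!i)"
      by (auto simp: sc_def jC_def rel_def due_def split: if_splits)
    have c0: "completion sc jC 0 \<le> ereal (due (jC!0))"
      by (rule feas_job[where F="{2}" and p="2" and q="3"]) (auto simp: sc_def jC_def rel_def due_def wk_def power2_eq_square)
    have c1: "completion sc jC 1 \<le> ereal (due (jC!1))"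
      by (rule feas_job[where F="{3/2}" and p="1" and q="3/2"]) (auto simp: sc_def jC_def rel_def due_def wk_def power2_eq_square)
    have c2: "completion sc jC 2 \<le> ereal (due (jC!2))"
      by (rule feas_job[where F="{}" and p="3/2" and q="2"]) (auto simp: sc_def jC_def rel_def due_def wk_def power2_eq_square)
    show ?thesis unfolding feasible_def
    proof (intro exI[of _ sc] conjI w allI impI)
      fix i assume "i < length jC"
      then have "i = 0 \<or> i = 1 \<or> i = 2" by (auto simp: jC_def)
      then show "completion sc jC i \<le> ereal (due (jC!i))" using c0 c1 c2 by auto
    qed
  qed
  have cB: "completion (A jB) jB i \<le> ereal (due (jB!i))" if "i < 3" for i
  proof -
    have "\<not> (\<exists>i<length jB. completion (A jB) jB i > ereal (due (jB!i)))" using neg jsB fB by blast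
    moreover have "length jB = 3" by (simp add: jB_def)
    ultimately show ?thesis using that by (metis not_less)
  qed
  have cC: "completion (A jC) jC i \<le> ereal (due (jC!i))" if "i < 3" for i
  proof -
    have "\<not> (\<exists>i<length jC. completion (A jC) jC i > ereal (due (jC!i)))" using neg jsC fC by blast
    moreover have "length jC = 3" by (simp add: jC_def)
    ultimately show ?thesis using that by (metis not_less)
  qed
  have agree: "A jB \<tau> = A jC \<tau>" if "\<tau> < 3/2" for \<tau>
  proof -
    have "takeWhile (\<lambda>j. rel j \<le> \<tau>) jB = takeWhile (\<lambda>j. rel j \<le> \<tau>) jC"
      using that by (simp add: jB_def jC_def rel_def)
    then show ?thesis using assms jsB jsC unfolding online_def by blast
  qed
  define s where "s = A jC"
  have jCn: "jC!0 = (0,3,3/2)" "jC!1 = (1,2,1/8)" "jC!2 = (3/2,2,1/8)" by (simp_all add: jC_def)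
  have jBn: "jB!0 = (0,3,3/2)" "jB!1 = (1,2,1/8)" "jB!2 = (2,3,1/2)" by (simp_all add: jB_def)
  define s' where "s' = A jB"
  have N3: "negligible {\<tau>\<in>{3/2..2}. \<not> s \<tau> = Some 2}"
  proof (rule tight)
    show "negligible {\<tau>\<in>{2..2}. s \<tau> = Some 2}"
      by (rule negligible_subset[of "{2}"]) auto
  next
    fix d' :: real assume "2 < d'"
    from compl_le[OF cC[of 2], of d'] this
    show "\<exists>t. 3/2 \<le> t \<and> t < d' \<and> (\<lambda>\<tau>. if s \<tau> = Some 2 then \<tau> - 3/2 else 0) integrable_on {3/2..t} \<and>
      (2-3/2)^2/2 \<le> integral {3/2..t} (\<lambda>\<tau>. if s \<tau> = Some 2 then \<tau> - 3/2 else 0)"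
      unfolding jCn rel_def due_def wk_def fst_conv snd_conv by (simp add: s_def power2_eq_square)
  qed auto
  have N2: "negligible {\<tau>\<in>{1..3/2}. \<not> s \<tau> = Some 1}"
  proof (rule tight)
    show "negligible {\<tau>\<in>{3/2..2}. s \<tau> = Some 1}"
      by (rule negligible_subset[OF N3]) auto
  next
    fix d' :: real assume "2 < d'"
    from compl_le[OF cC[of 1], of d'] this
    show "\<exists>t. 1 \<le> t \<and> t < d' \<and> (\<lambda>\<tau>. if s \<tau> = Some 1 then \<tau> - 1 else 0) integrable_on {1..t} \<and>
      (3/2-1)^2/2 \<le> integral {1..t} (\<lambda>\<tau>. if s \<tau> = Some 1 then \<tau> - 1 else 0)"
      unfolding jCn rel_def due_def wk_def fst_conv snd_conv by (simp add: s_def power2_eq_square)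
  qed auto
  have N4: "negligible {\<tau>\<in>{2..3}. \<not> s' \<tau> = Some 2}"
  proof (rule tight)
    show "negligible {\<tau>\<in>{3..3}. s' \<tau> = Some 2}"
      by (rule negligible_subset[of "{3}"]) auto
  next
    fix d' :: real assume "3 < d'"
    from compl_le[OF cB[of 2], of d'] this
    show "\<exists>t. 2 \<le> t \<and> t < d' \<and> (\<lambda>\<tau>. if s' \<tau> = Some 2 then \<tau> - 2 else 0) integrable_on {2..t} \<and>
      (3-2)^2/2 \<le> integral {2..t} (\<lambda>\<tau>. if s' \<tau> = Some 2 then \<tau> - 2 else 0)"
      unfolding jBn rel_def due_def wk_def fst_conv snd_conv by (simp add: s'_def power2_eq_square)
  qed auto
  have "\<exists>t. 0 \<le> t \<and> t < 3 + 1/100 \<and> (\<lambda>\<tau>. if s' \<tau> = Some 0 then \<tau> else 0) integrable_on {0..t} \<and>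
      3/2 \<le> integral {0..t} (\<lambda>\<tau>. if s' \<tau> = Some 0 then \<tau> else 0)"
    using compl_le[OF cB[of 0], of "3 + 1/100"]
    unfolding jBn rel_def due_def wk_def fst_conv snd_conv unfolding diff_zero by (simp add: s'_def)
  then obtain t where t: "0 \<le> t" "t < 3 + 1/100"
    "(\<lambda>\<tau>. if s' \<tau> = Some 0 then \<tau> else 0) integrable_on {0..t}"
    "3/2 \<le> integral {0..t} (\<lambda>\<tau>. if s' \<tau> = Some 0 then \<tau> else 0)" by blast
  show False
  proof (rule job1_bad[OF _ _ t])
    show "negligible {\<tau>\<in>{1..3/2}. s' \<tau> = Some 0}"
    proof (rule negligible_subset[of "insert (3/2) {\<tau>\<in>{1..3/2}. \<not> s \<tau> = Some 1}"])
      show "negligible (insert (3/2) {\<tau>\<in>{1..3/2}. \<not> s \<tau> = Some 1})" using N2 by simp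
      show "{\<tau>\<in>{1..3/2}. s' \<tau> = Some 0} \<subseteq> insert (3/2) {\<tau>\<in>{1..3/2}. \<not> s \<tau> = Some 1}"
        using agree by (force simp: s_def s'_def)
    qed
    show "negligible {\<tau>\<in>{2..3}. s' \<tau> = Some 0}"
      by (rule negligible_subset[OF N4]) auto
  qed
qed

end
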